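(* Let $X+_{f,g}Y$ and $Z+_{h,j}W$ be Artin–Wraith glueings of topological spaces and let $\psi:X\to Z$ and $\phi:Y\to W$ be continuous maps. Define $\psi+\phi:X+_{f,g}Y\to Z+_{h,j}W$ by $\psi$ on $X$ and $\phi$ on $Y$. Then $\psi+\phi$ is continuous if and only if $f(\psi^{-1}(A))\subseteq\phi^{-1}(h(A))$ for all $A\in\mathrm{Closed}(Z)$ and $g(\phi^{-1}(B))\subseteq\psi^{-1}(j(B))$ for all $B\in\mathrm{Closed}(W)$.
   Context: $\mathrm{Closed}(A)$ is the set of closed subsets of a space $A$. A map $f:\mathrm{Closed}(X)\to\mathrm{Closed}(Y)$ is admissible if $f(\emptyset)=\emptyset$ and $f$ preserves finite unions. An admissible pair is a pair of admissible maps $f:\mathrm{Closed}(X)\to\mathrm{Closed}(Y)$, $g:\mathrm{Closed}(Y)\to\mathrm{Closed}(X)$ with $g\circ f(A)\subseteq A$ and $f\circ g(B)\subseteq B$ for all closed $A,B$. For such a pair, $X+_{f,g}Y$ is the set $X\sqcup Y$ whose closed sets are the $D$ with $D\cap X$ closed in $X$, $D\cap Y$ closed in $Y$, $f(D\cap X)\subseteq D$, $g(D\cap Y)\subseteq D$. Similarly for $(h,j)$ and $Z+_{h,j}W$. *)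

theory Defs
  imports "HOL-Analysis.Analysis"
begin

definition admissible :: "'a topology \<Rightarrow> 'b topology \<Rightarrow> ('a set \<Rightarrow> 'b set) \<Rightarrow> bool" where
  "admissible X Y f \<longleftrightarrow>
     (\<forall>A. closedin X A \<longrightarrow> closedin Y (f A)) \<and>
     f {} = {} \<and>
     (\<forall>A B. closedin X A \<longrightarrow> closedin X B \<longrightarrow> f (A \<union> B) = f A \<union> f B)"

definition admissible_pair ::
  "'a topology \<Rightarrow> 'b topology \<Rightarrow> ('a set \<Rightarrow> 'b set) \<Rightarrow> ('b set \<Rightarrow> 'a set) \<Rightarrow> bool" where
  "admissible_pair X Y f g \<longleftrightarrow>
     admissible X Y f \<and> admissible Y X g \<and>
     (\<forall>A. closedin X A \<longrightarrow> g (f A) \<subseteq> A) \<and>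
     (\<forall>B. closedin Y B \<longrightarrow> f (g B) \<subseteq> B)"

definition glue_closed ::
  "'a topology \<Rightarrow> 'b topology \<Rightarrow> ('a set \<Rightarrow> 'b set) \<Rightarrow> ('b set \<Rightarrow> 'a set) \<Rightarrow> ('a + 'b) set \<Rightarrow> bool" where
  "glue_closed X Y f g D \<longleftrightarrow>
     D \<subseteq> topspace X <+> topspace Y \<and>
     closedin X (Inl -` D) \<and> closedin Y (Inr -` D) \<and>
     Inr ` f (Inl -` D) \<subseteq> D \<and> Inl ` g (Inr -` D) \<subseteq> D"

definition glue ::
  "'a topology \<Rightarrow> 'b topology \<Rightarrow> ('a set \<Rightarrow> 'b set) \<Rightarrow> ('b set \<Rightarrow> 'a set) \<Rightarrow> ('a + 'b) topology" where
  "glue X Y f g = topology (\<lambda>U. U \<subseteq> topspace X <+> topspace Y \<and>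
      glue_closed X Y f g ((topspace X <+> topspace Y) - U))"

end

theory Submission imports Defs begin

lemma vimInl_Plus[simp]: "Inl -` (A <+> B) = A" by auto
lemma vimInr_Plus[simp]: "Inr -` (A <+> B) = B" by auto

lemma adm_mono:
  assumes "admissible X Y f" "closedin X A" "closedin X B" "A \<subseteq> B"
  shows "f A \<subseteq> f B"
proof -
  have "f B = f (A \<union> B)" using assms(4) by (simp add: sup_absorb2)
  also have "\<dots> = f A \<union> f B" using assms unfolding admissible_def by blast
  finally show ?thesis by blast
qed

lemma adm_top:
  assumes "admissible X Y f" "closedin X A"
  shows "f A \<subseteq> topspace Y"
  using assms closedin_subset unfolding admissible_def by blast

lemma glue_istop:
  assumes "admissible X Y f" "admissible Y X g"
  shows "istopology (\<lambda>U. U \<subseteq> topspace X <+> topspace Y \<and>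
      glue_closed X Y f g ((topspace X <+> topspace Y) - U))"
  (is "istopology ?O")
proof -
  let ?S = "topspace X <+> topspace Y"
  have un: "glue_closed X Y f g (C \<union> D)" if "glue_closed X Y f g C" "glue_closed X Y f g D" for C D
  proof -
    have a: "Inl -` (C \<union> D) = Inl -` C \<union> Inl -` D" "Inr -` (C \<union> D) = Inr -` C \<union> Inr -` D" by auto
    have "f (Inl -` (C \<union> D)) = f (Inl -` C) \<union> f (Inl -` D)"
      using that assms(1) unfolding a admissible_def glue_closed_def by blast
    moreover have "g (Inr -` (C \<union> D)) = g (Inr -` C) \<union> g (Inr -` D)"
      using that assms(2) unfolding a admissible_def glue_closed_def by blast
    ultimately show ?thesis using that unfolding glue_closed_def a by auto
  qed
  have int: "glue_closed X Y f g (?S \<inter> \<Inter>K)" if "\<And>C. C \<in> K \<Longrightarrow> glue_closed X Y f g C" for K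
  proof -
    have a: "Inl -` (?S \<inter> \<Inter>K) = topspace X \<inter> \<Inter>((\<lambda>C. Inl -` C) ` K)"
      "Inr -` (?S \<inter> \<Inter>K) = topspace Y \<inter> \<Inter>((\<lambda>C. Inr -` C) ` K)" by auto
    have c1: "closedin X (Inl -` (?S \<inter> \<Inter>K))" unfolding a
      using that unfolding glue_closed_def
      by (metis (no_types, lifting) closedin_Inter closedin_topspace closedin_Int Inter_empty image_iff image_is_empty inf_top.right_neutral)
    have c2: "closedin Y (Inr -` (?S \<inter> \<Inter>K))" unfolding a
      using that unfolding glue_closed_def
      by (metis (no_types, lifting) closedin_Inter closedin_topspace closedin_Int Inter_empty image_iff image_is_empty inf_top.right_neutral)
    have f1: "f (Inl -` (?S \<inter> \<Inter>K)) \<subseteq> topspace Y" using adm_top[OF assms(1) c1] .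
    have f2: "f (Inl -` (?S \<inter> \<Inter>K)) \<subseteq> Inr -` C" if "C \<in> K" for C
    proof -
      have "f (Inl -` (?S \<inter> \<Inter>K)) \<subseteq> f (Inl -` C)"
        apply (rule adm_mono[OF assms(1) c1])
        using \<open>C \<in> K\<close> \<open>\<And>C. C \<in> K \<Longrightarrow> glue_closed X Y f g C\<close> unfolding glue_closed_def by auto
      also have "\<dots> \<subseteq> Inr -` C" using \<open>C \<in> K\<close> \<open>\<And>C. C \<in> K \<Longrightarrow> glue_closed X Y f g C\<close> unfolding glue_closed_def by blast
      finally show ?thesis .
    qed
    have g1: "g (Inr -` (?S \<inter> \<Inter>K)) \<subseteq> topspace X" using adm_top[OF assms(2) c2] .
    have g2: "g (Inr -` (?S \<inter> \<Inter>K)) \<subseteq> Inl -` C" if "C \<in> K" for C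
    proof -
      have "g (Inr -` (?S \<inter> \<Inter>K)) \<subseteq> g (Inr -` C)"
        apply (rule adm_mono[OF assms(2) c2])
        using \<open>C \<in> K\<close> \<open>\<And>C. C \<in> K \<Longrightarrow> glue_closed X Y f g C\<close> unfolding glue_closed_def by auto
      also have "\<dots> \<subseteq> Inl -` C" using \<open>C \<in> K\<close> \<open>\<And>C. C \<in> K \<Longrightarrow> glue_closed X Y f g C\<close> unfolding glue_closed_def by blast
      finally show ?thesis .
    qed
    show ?thesis unfolding glue_closed_def using c1 c2 f1 f2 g1 g2 by blast
  qed
  show ?thesis unfolding istopology_def
  proof (rule conjI; intro allI impI)
    fix U V assume "?O U" "?O V"
    then have "glue_closed X Y f g ((?S - U) \<union> (?S - V))" using un by blast
    moreover have "(?S - U) \<union> (?S - V) = ?S - (U \<inter> V)" by blast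
    ultimately show "?O (U \<inter> V)" using \<open>?O U\<close> by auto
  next
    fix K assume "\<forall>U\<in>K. ?O U"
    then have "glue_closed X Y f g (?S \<inter> \<Inter>((\<lambda>U. ?S - U) ` K))" by (intro int) auto
    moreover have "?S \<inter> \<Inter>((\<lambda>U. ?S - U) ` K) = ?S - \<Union>K" by blast
    ultimately show "?O (\<Union>K)" using \<open>\<forall>U\<in>K. ?O U\<close> by auto
  qed
qed

lemma glue_closedin:
  assumes "admissible X Y f" "admissible Y X g"
  shows "topspace (glue X Y f g) = topspace X <+> topspace Y"
    and "closedin (glue X Y f g) D \<longleftrightarrow> glue_closed X Y f g D"
proof -
  let ?S = "topspace X <+> topspace Y"
  have o: "openin (glue X Y f g) U \<longleftrightarrow> U \<subseteq> ?S \<and> glue_closed X Y f g (?S - U)" for U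
    unfolding glue_def using topology_inverse'[OF glue_istop[OF assms]] by simp
  have e: "glue_closed X Y f g {}" using assms unfolding glue_closed_def admissible_def by auto
  have "openin (glue X Y f g) ?S" using o e by simp
  moreover have "\<And>U. openin (glue X Y f g) U \<Longrightarrow> U \<subseteq> ?S" using o by blast
  ultimately show t: "topspace (glue X Y f g) = ?S"
    unfolding topspace_def by blast
  have "D \<subseteq> ?S \<Longrightarrow> ?S - (?S - D) = D" by blast
  moreover have "glue_closed X Y f g D \<Longrightarrow> D \<subseteq> ?S" unfolding glue_closed_def by blast
  ultimately show "closedin (glue X Y f g) D \<longleftrightarrow> glue_closed X Y f g D"
    unfolding closedin_def t o by auto
qed


theorem mainTheorem10:
  fixes X :: "'a topology" and Y :: "'b topology" and Z :: "'c topology" and W :: "'d topology"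
    and f :: "'a set \<Rightarrow> 'b set" and g :: "'b set \<Rightarrow> 'a set"
    and h :: "'c set \<Rightarrow> 'd set" and j :: "'d set \<Rightarrow> 'c set"
    and \<psi> :: "'a \<Rightarrow> 'c" and \<phi> :: "'b \<Rightarrow> 'd"
  assumes "admissible_pair X Y f g"
    and "admissible_pair Z W h j"
    and "continuous_map X Z \<psi>"
    and "continuous_map Y W \<phi>"
  shows "continuous_map (glue X Y f g) (glue Z W h j) (map_sum \<psi> \<phi>) \<longleftrightarrow>
    (\<forall>A. closedin Z A \<longrightarrow>
        f {x \<in> topspace X. \<psi> x \<in> A} \<subseteq> {y \<in> topspace Y. \<phi> y \<in> h A}) \<and>
    (\<forall>B. closedin W B \<longrightarrow>
        g {y \<in> topspace Y. \<phi> y \<in> B} \<subseteq> {x \<in> topspace X. \<psi> x \<in> j B})"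
proof -
  have af: "admissible X Y f" and ag: "admissible Y X g" and pfg: "\<And>A. closedin X A \<Longrightarrow> g (f A) \<subseteq> A"
    "\<And>B. closedin Y B \<Longrightarrow> f (g B) \<subseteq> B"
    using assms(1) unfolding admissible_pair_def by auto
  have ah: "admissible Z W h" and aj: "admissible W Z j" and phj: "\<And>A. closedin Z A \<Longrightarrow> j (h A) \<subseteq> A"
    "\<And>B. closedin W B \<Longrightarrow> h (j B) \<subseteq> B"
    using assms(2) unfolding admissible_pair_def by auto
  note G1 = glue_closedin[OF af ag] and G2 = glue_closedin[OF ah aj]
  let ?m = "map_sum \<psi> \<phi>"
  let ?S = "topspace X <+> topspace Y"
  have cX: "closedin X {x \<in> topspace X. \<psi> x \<in> A}" if "closedin Z A" for A
    using assms(3) that by (simp add: continuous_map_closedin)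
  have cY: "closedin Y {x \<in> topspace Y. \<phi> x \<in> B}" if "closedin W B" for B
    using assms(4) that by (simp add: continuous_map_closedin)
  have sp: "?m \<in> topspace (glue X Y f g) \<rightarrow> topspace (glue Z W h j)"
    unfolding G1(1) G2(1) using assms(3,4) by (auto simp: continuous_map_def)
  have pre: "{x \<in> ?S. ?m x \<in> D} = {x \<in> topspace X. \<psi> x \<in> Inl -` D} <+> {x \<in> topspace Y. \<phi> x \<in> Inr -` D}" for D
    by auto
  show ?thesis
  proof
    assume c: "continuous_map (glue X Y f g) (glue Z W h j) ?m"
    have P: "glue_closed X Y f g {x \<in> ?S. ?m x \<in> D}" if "glue_closed Z W h j D" for D
      using c that unfolding continuous_map_closedin G1 G2 by auto
    show "(\<forall>A. closedin Z A \<longrightarrow>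
        f {x \<in> topspace X. \<psi> x \<in> A} \<subseteq> {y \<in> topspace Y. \<phi> y \<in> h A}) \<and>
    (\<forall>B. closedin W B \<longrightarrow>
        g {y \<in> topspace Y. \<phi> y \<in> B} \<subseteq> {x \<in> topspace X. \<psi> x \<in> j B})"
    proof (intro conjI allI impI)
      fix A assume A: "closedin Z A"
      let ?D = "A <+> h A"
      have hA: "closedin W (h A)" using ah A unfolding admissible_def by blast
      have "glue_closed Z W h j ?D" unfolding glue_closed_def
        using A hA phj(1)[OF A] closedin_subset[OF A] closedin_subset[OF hA] by auto
      then have "glue_closed X Y f g ({x \<in> topspace X. \<psi> x \<in> A} <+> {x \<in> topspace Y. \<phi> x \<in> h A})"
        using P[of ?D] unfolding pre by simp
      then show "f {x \<in> topspace X. \<psi> x \<in> A} \<subseteq> {y \<in> topspace Y. \<phi> y \<in> h A}"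
        unfolding glue_closed_def by auto
    next
      fix B assume B: "closedin W B"
      let ?D = "j B <+> B"
      have jB: "closedin Z (j B)" using aj B unfolding admissible_def by blast
      have "glue_closed Z W h j ?D" unfolding glue_closed_def
        using B jB phj(2)[OF B] closedin_subset[OF B] closedin_subset[OF jB] by auto
      then have "glue_closed X Y f g ({x \<in> topspace X. \<psi> x \<in> j B} <+> {x \<in> topspace Y. \<phi> x \<in> B})"
        using P[of ?D] unfolding pre by simp
      then show "g {y \<in> topspace Y. \<phi> y \<in> B} \<subseteq> {x \<in> topspace X. \<psi> x \<in> j B}"
        unfolding glue_closed_def by auto
    qed
  next
    assume H: "(\<forall>A. closedin Z A \<longrightarrow>
        f {x \<in> topspace X. \<psi> x \<in> A} \<subseteq> {y \<in> topspace Y. \<phi> y \<in> h A}) \<and>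
    (\<forall>B. closedin W B \<longrightarrow>
        g {y \<in> topspace Y. \<phi> y \<in> B} \<subseteq> {x \<in> topspace X. \<psi> x \<in> j B})"
    have "glue_closed X Y f g {x \<in> ?S. ?m x \<in> D}" if D: "glue_closed Z W h j D" for D
    proof -
      let ?A = "Inl -` D" and ?B = "Inr -` D"
      have A: "closedin Z ?A" and B: "closedin W ?B" and hD: "Inr ` h ?A \<subseteq> D" and jD: "Inl ` j ?B \<subseteq> D"
        using D unfolding glue_closed_def by auto
      have 1: "f {x \<in> topspace X. \<psi> x \<in> ?A} \<subseteq> {x \<in> topspace Y. \<phi> x \<in> ?B}"
        using H A hD by blast
      have 2: "g {x \<in> topspace Y. \<phi> x \<in> ?B} \<subseteq> {x \<in> topspace X. \<psi> x \<in> ?A}"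
        using H B jD by blast
      show ?thesis unfolding pre glue_closed_def using cX[OF A] cY[OF B] 1 2 by auto
    qed
    then show "continuous_map (glue X Y f g) (glue Z W h j) ?m"
      unfolding continuous_map_closedin G1 G2 using sp[unfolded G1 G2] by auto
  qed
qed

end
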